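(* Let $\mathcal{D}$ be a symmetric $2$-$(56,11,2)$ design (biplane), and let $S$ be the set of all $(0,1)$-vectors of Hamming weight $12$ in $L^\perp$, where $L$ is the linear code over $GF(3)$ of length $56$ (coordinates indexed by the blocks of $\mathcal{D}$) spanned by the rows of the points-by-blocks incidence matrix of $\mathcal{D}$. Let $B$ be a block of $\mathcal{D}$ and $\mathcal{D}_B$ the residual design (a $2$-$(45,9,2)$ design with $55$ blocks, indexed by the blocks of $\mathcal{D}$ other than $B$). Let $S_B\subseteq S$ be the set of vectors in $S$ having entry $0$ in the coordinate indexed by $B$. If there exists a quasi-symmetric $2$-$(56,12,9)$ design $\hat{\mathcal{D}}$ with block intersection numbers $0$ and $3$ and a point $z$ of $\hat{\mathcal{D}}$ such that the derived design $\hat{\mathcal{D}}^z$ is isomorphic to the dual design $(\mathcal{D}_B)^*$ (whose points are the $55$ blocks of $\mathcal{D}$ other than $B$), then $S_B$ contains a set of $165$ vectors whose restrictions to the $55$ coordinates other than $B$ are the incidence vectors of the blocks of a $1$-$(55,12,36)$ design (namely $\hat{\mathcal{D}}_z$, transported via this isomorphism) in which any two distinct blocks are either disjoint or meet in exactly $3$ points.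
   Context: A $t$-$(v,k,\lambda)$ design is a pair $(X,\mathcal{B})$ with $|X|=v$ and a collection $\mathcal{B}$ of $k$-subsets (blocks) such that each $t$-subset of points lies in exactly $\lambda$ blocks; symmetric means the number of blocks is $v$, and a biplane is a symmetric design with $\lambda=2$. A $2$-design is quasi-symmetric with intersection numbers $x<y$ if any two distinct blocks meet in exactly $x$ or $y$ points. For a block $B$, the residual design $\mathcal{D}_B$ has point set $X\setminus B$ and blocks $B_j\setminus B$ ($B_j\ne B$). For a point $z$, the derived design $\hat{\mathcal{D}}^z$ has points $X\setminus\{z\}$ and blocks $\{C\setminus\{z\}: z\in C\}$, and the residual design $\hat{\mathcal{D}}_z$ has points $X\setminus\{z\}$ and blocks $\{C: z\notin C\}$. The dual design swaps the roles of points and blocks, keeping incidence. Code duals are with respect to the standard inner product over $GF(3)$. *)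

theory Defs
  imports Main "HOL-Library.Numeral_Type"
begin

definition t_design :: "nat \<Rightarrow> nat \<Rightarrow> nat \<Rightarrow> nat \<Rightarrow> 'a set \<Rightarrow> 'a set set \<Rightarrow> bool" where
  "t_design t v k lam X Bs \<longleftrightarrow> finite X \<and> card X = v \<and>
     (\<forall>C\<in>Bs. C \<subseteq> X \<and> card C = k) \<and>
     (\<forall>T. T \<subseteq> X \<and> card T = t \<longrightarrow> card {C\<in>Bs. T \<subseteq> C} = lam)"

definition symmetric_design :: "nat \<Rightarrow> nat \<Rightarrow> nat \<Rightarrow> 'a set \<Rightarrow> 'a set set \<Rightarrow> bool" where
  "symmetric_design v k lam X Bs \<longleftrightarrow> t_design 2 v k lam X Bs \<and> card Bs = v"

definition quasi_symmetric :: "nat \<Rightarrow> nat \<Rightarrow> 'a set set \<Rightarrow> bool" where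
  "quasi_symmetric x y Bs \<longleftrightarrow>
     (\<forall>C1\<in>Bs. \<forall>C2\<in>Bs. C1 \<noteq> C2 \<longrightarrow> card (C1 \<inter> C2) = x \<or> card (C1 \<inter> C2) = y)"

definition dual_residual_blocks :: "'a set \<Rightarrow> 'a set set \<Rightarrow> 'a set \<Rightarrow> 'a set set set" where
  "dual_residual_blocks X Bs B = (\<lambda>x. {C \<in> Bs - {B}. x \<in> C - B}) ` (X - B)"

definition derived_blocks :: "'b set set \<Rightarrow> 'b \<Rightarrow> 'b set set" where
  "derived_blocks Bs z = (\<lambda>C. C - {z}) ` {C \<in> Bs. z \<in> C}"

definition pt_residual_blocks :: "'b set set \<Rightarrow> 'b \<Rightarrow> 'b set set" where
  "pt_residual_blocks Bs z = {C \<in> Bs. z \<notin> C}"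

text \<open>Vectors over GF(3) (the type 3) with coordinates indexed by the blocks Bs.\<close>
definition vecs :: "'a set set \<Rightarrow> ('a set \<Rightarrow> 3) set" where
  "vecs Bs = {v. \<forall>C. C \<notin> Bs \<longrightarrow> v C = 0}"

definition code_L :: "'a set \<Rightarrow> 'a set set \<Rightarrow> ('a set \<Rightarrow> 3) set" where
  "code_L X Bs = {w \<in> vecs Bs. \<exists>c :: 'a \<Rightarrow> 3.
      \<forall>C\<in>Bs. w C = (\<Sum>p\<in>X. c p * (if p \<in> C then 1 else 0))}"

definition dual_code :: "'a set set \<Rightarrow> ('a set \<Rightarrow> 3) set \<Rightarrow> ('a set \<Rightarrow> 3) set" where
  "dual_code Bs L = {v \<in> vecs Bs. \<forall>w\<in>L. (\<Sum>C\<in>Bs. v C * w C) = 0}"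

definition support :: "'a set set \<Rightarrow> ('a set \<Rightarrow> 3) \<Rightarrow> 'a set set" where
  "support Bs v = {C \<in> Bs. v C \<noteq> 0}"

definition S_set :: "'a set \<Rightarrow> 'a set set \<Rightarrow> ('a set \<Rightarrow> 3) set" where
  "S_set X Bs = {v \<in> dual_code Bs (code_L X Bs).
      (\<forall>C\<in>Bs. v C = 0 \<or> v C = 1) \<and> card (support Bs v) = 12}"

definition S_B :: "'a set \<Rightarrow> 'a set set \<Rightarrow> 'a set \<Rightarrow> ('a set \<Rightarrow> 3) set" where
  "S_B X Bs B = {v \<in> S_set X Bs. v B = 0}"

end

theory Submission
  imports Defs
begin
lemma card_filter_sum: "finite A \<Longrightarrow> card {x\<in>A. P x} = (\<Sum>x\<in>A. if P x then 1 else 0)"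
  by (simp add: sum.inter_filter[symmetric])
lemma double_count:
  assumes "finite A" "finite B"
  shows "(\<Sum>a\<in>A. card {b\<in>B. R a b}) = (\<Sum>b\<in>B. card {a\<in>A. R a b})"
  using assms by (simp add: card_filter_sum sum.swap[of _ A B])

lemma design_fin:
  assumes "t_design t v k lam X Bs"
  shows "finite X" "finite Bs" "card X = v" "\<And>C. C\<in>Bs \<Longrightarrow> C \<subseteq> X" "\<And>C. C\<in>Bs \<Longrightarrow> card C = k"
proof -
  show fx: "finite X" using assms by (simp add: t_design_def)
  have "Bs \<subseteq> Pow X" using assms by (auto simp: t_design_def)
  then show "finite Bs" by (rule finite_subset) (simp add: fx)
qed (use assms in \<open>auto simp: t_design_def\<close>)

lemma design_pair:
  assumes "t_design 2 v k lam X Bs" "p \<in> X" "q \<in> X" "p \<noteq> q"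
  shows "card {C\<in>Bs. p \<in> C \<and> q \<in> C} = lam"
proof -
  have "{p,q} \<subseteq> X \<and> card {p,q} = 2" using assms by auto
  have H: "\<forall>T. T \<subseteq> X \<and> card T = 2 \<longrightarrow> card {C\<in>Bs. T \<subseteq> C} = lam"
    using assms(1) unfolding t_design_def by simp
  have "card {C\<in>Bs. {p,q} \<subseteq> C} = lam" by (rule H[rule_format]) (use assms in auto)
  moreover have "{C\<in>Bs. {p,q} \<subseteq> C} = {C\<in>Bs. p \<in> C \<and> q \<in> C}" by auto
  ultimately show ?thesis by simp
qed

lemma rep2:
  assumes d: "t_design 2 v k lam X Bs" and p: "p \<in> X"
  shows "card {C\<in>Bs. p \<in> C} * (k - 1) = lam * (v - 1)"
proof -
  note f = design_fin[OF d]
  have "(\<Sum>q\<in>X-{p}. card {C\<in>Bs. p \<in> C \<and> q \<in> C}) = (\<Sum>q\<in>X-{p}. lam)"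
    using design_pair[OF d p] by (intro sum.cong) auto
  also have "\<dots> = lam * (v - 1)" using f p by (simp add: card_Diff_singleton)
  finally have 1: "(\<Sum>q\<in>X-{p}. card {C\<in>Bs. p \<in> C \<and> q \<in> C}) = lam * (v - 1)" .
  have "(\<Sum>q\<in>X-{p}. card {C\<in>Bs. p \<in> C \<and> q \<in> C}) = (\<Sum>C\<in>Bs. card {q\<in>X-{p}. p \<in> C \<and> q \<in> C})"
    using f by (intro double_count) auto
  also have "\<dots> = (\<Sum>C\<in>Bs. if p \<in> C then k - 1 else 0)"
  proof (intro sum.cong refl)
    fix C assume C: "C \<in> Bs"
    have "{q\<in>X-{p}. p \<in> C \<and> q \<in> C} = (if p \<in> C then C - {p} else {})" using f(4)[OF C] by auto
    then show "card {q\<in>X-{p}. p \<in> C \<and> q \<in> C} = (if p \<in> C then k - 1 else 0)"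
      using f(5)[OF C] f(4)[OF C] f(1) by (auto simp: card_Diff_singleton dest: finite_subset)
  qed
  also have "\<dots> = card {C\<in>Bs. p \<in> C} * (k - 1)"
    using f by (simp add: sum.inter_filter[symmetric])
  finally show ?thesis using 1 by simp
qed

lemma blocks_count:
  assumes d: "t_design t v k lam X Bs" and r: "\<And>p. p\<in>X \<Longrightarrow> card {C\<in>Bs. p \<in> C} = r"
  shows "card Bs * k = v * r"
proof -
  note f = design_fin[OF d]
  have "(\<Sum>C\<in>Bs. card {p\<in>X. p \<in> C}) = (\<Sum>p\<in>X. card {C\<in>Bs. p \<in> C})"
    using f by (intro double_count) auto
  moreover have "(\<Sum>C\<in>Bs. card {p\<in>X. p \<in> C}) = (\<Sum>C\<in>Bs. k)"
  proof (intro sum.cong refl)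
    fix C assume "C \<in> Bs" then have "{p\<in>X. p \<in> C} = C" "card C = k" using f by auto
    then show "card {p\<in>X. p \<in> C} = k" by simp
  qed
  moreover have "(\<Sum>p\<in>X. card {C\<in>Bs. p \<in> C}) = (\<Sum>p\<in>X. r)" using r by simp
  ultimately show ?thesis using f by simp
qed

lemma bi_basic:
  assumes "symmetric_design 56 11 2 X Bs"
  shows "t_design 2 56 11 2 X Bs" "card Bs = 56"
  using assms by (auto simp: symmetric_design_def)

lemma bi_rep:
  assumes bi: "symmetric_design 56 11 2 X Bs" and p: "p \<in> X"
  shows "card {C\<in>Bs. p \<in> C} = 11"
  using rep2[OF bi_basic(1)[OF bi] p] by simp

lemma bi_int:
  assumes bi: "symmetric_design 56 11 2 X Bs" and B0: "B0 \<in> Bs" and D: "D \<in> Bs" "D \<noteq> B0"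
  shows "card (B0 \<inter> D) = 2"
proof -
  note d = bi_basic(1)[OF bi]
  note f = design_fin[OF d]
  define A where "A = Bs - {B0}"
  have fA: "finite A" using f by (simp add: A_def)
  have cA: "card A = 55" using B0 bi_basic(2)[OF bi] f by (simp add: A_def card_Diff_singleton)
  have B0X: "B0 \<subseteq> X" and cB0: "card B0 = 11" using f B0 by auto
  have fB0: "finite B0" using B0X f(1) by (rule finite_subset)
  define a where "a D = card {p\<in>B0. p \<in> D}" for D
  have aint: "a D = card (B0 \<inter> D)" for D unfolding a_def by (metis Int_def)
  have r10: "card {D\<in>A. p \<in> D} = 10" if "p \<in> B0" for p
  proof -
    have "{D\<in>A. p \<in> D} = {D\<in>Bs. p \<in> D} - {B0}" by (auto simp: A_def)
    moreover have "B0 \<in> {D\<in>Bs. p \<in> D}" using that B0 by auto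
    moreover have "card {D\<in>Bs. p \<in> D} = 11" using bi_rep[OF bi] that B0X by auto
    moreover have "finite {D\<in>Bs. p \<in> D}" using f by auto
    ultimately show ?thesis by (simp add: card_Diff_singleton)
  qed
  have S1: "(\<Sum>D\<in>A. a D) = 110"
  proof -
    have "(\<Sum>D\<in>A. a D) = (\<Sum>p\<in>B0. card {D\<in>A. p \<in> D})"
      unfolding a_def using fA fB0 by (rule double_count)
    also have "\<dots> = (\<Sum>p\<in>B0. 10)" using r10 by simp
    finally show ?thesis using cB0 by simp
  qed
  have pq: "card {D\<in>A. p \<in> D \<and> q \<in> D} = (if p = q then 10 else 1)" if "p \<in> B0" "q \<in> B0" for p q
  proof (cases "p = q")
    case True then show ?thesis using r10[OF that(1)] by simp
  next
    case False
    have "{D\<in>A. p \<in> D \<and> q \<in> D} = {D\<in>Bs. p \<in> D \<and> q \<in> D} - {B0}" by (auto simp: A_def)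
    moreover have "B0 \<in> {D\<in>Bs. p \<in> D \<and> q \<in> D}" using that B0 by auto
    moreover have "card {D\<in>Bs. p \<in> D \<and> q \<in> D} = 2" using design_pair[OF d] that B0X False by auto
    moreover have "finite {D\<in>Bs. p \<in> D \<and> q \<in> D}" using f by auto
    ultimately show ?thesis using False by (simp add: card_Diff_singleton)
  qed
  have S2: "(\<Sum>D\<in>A. a D * a D) = 220"
  proof -
    have "(\<Sum>D\<in>A. a D * a D) = (\<Sum>D\<in>A. \<Sum>p\<in>B0. \<Sum>q\<in>B0. (if p \<in> D \<and> q \<in> D then 1 else 0))"
    proof (intro sum.cong refl)
      fix D
      have "a D = (\<Sum>p\<in>B0. if p \<in> D then 1 else 0)" unfolding a_def using fB0 by (rule card_filter_sum)
      then have "a D * a D = (\<Sum>p\<in>B0. \<Sum>q\<in>B0. (if p \<in> D then 1 else 0) * (if q \<in> D then 1 else 0))"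
        by (simp add: sum_product)
      then show "a D * a D = (\<Sum>p\<in>B0. \<Sum>q\<in>B0. (if p \<in> D \<and> q \<in> D then 1 else 0))"
        by (auto intro!: sum.cong)
    qed
    also have "\<dots> = (\<Sum>p\<in>B0. \<Sum>D\<in>A. \<Sum>q\<in>B0. (if p \<in> D \<and> q \<in> D then 1 else 0))"
      by (rule sum.swap)
    also have "\<dots> = (\<Sum>p\<in>B0. \<Sum>q\<in>B0. \<Sum>D\<in>A. (if p \<in> D \<and> q \<in> D then 1 else 0))"
      by (intro sum.cong refl sum.swap)
    also have "\<dots> = (\<Sum>p\<in>B0. \<Sum>q\<in>B0. card {D\<in>A. p \<in> D \<and> q \<in> D})"
      using fA by (simp add: card_filter_sum)
    also have "\<dots> = (\<Sum>p\<in>B0. \<Sum>q\<in>B0. (if p = q then 10 else 1))"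
      using pq by (intro sum.cong refl) auto
    also have "\<dots> = (\<Sum>p\<in>B0. 20)"
    proof (intro sum.cong refl)
      fix p assume p: "p \<in> B0"
      have "(\<Sum>q\<in>B0. (if p = q then 10 else 1)) = (if p = p then 10 else 1) + (\<Sum>q\<in>B0-{p}. (if p = q then 10 else 1))"
        using fB0 p by (rule sum.remove)
      also have "(\<Sum>q\<in>B0-{p}. (if p = q then 10 else 1)) = (\<Sum>q\<in>B0-{p}. (1::nat))" by (intro sum.cong) auto
      finally show "(\<Sum>q\<in>B0. (if p = q then 10 else 1)) = (20::nat)" using cB0 p fB0 by (simp add: card_Diff_singleton)
    qed
    finally show ?thesis using cB0 by simp
  qed
  have "(\<Sum>D\<in>A. (int (a D) - 2)^2) = (\<Sum>D\<in>A. int (a D * a D) - 4 * int (a D) + 4)"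
    by (intro sum.cong refl) (simp add: power2_eq_square algebra_simps)
  also have "\<dots> = int (\<Sum>D\<in>A. a D * a D) - 4 * int (\<Sum>D\<in>A. a D) + 4 * int (card A)"
    by (simp add: sum.distrib sum_subtractf sum_distrib_left)
  also have "\<dots> = 0" using S1 S2 cA by simp
  finally have "(\<Sum>D\<in>A. (int (a D) - 2)^2) = 0" .
  then have "\<forall>D\<in>A. (int (a D) - 2)^2 = 0" using fA by (subst (asm) sum_nonneg_eq_0_iff) auto
  then have "(int (a D) - 2)^2 = 0" using D by (auto simp: A_def)
  then show ?thesis by (simp add: aint)
qed

lemma key_mod3:
  fixes X :: "'a set" and Bs :: "'a set set" and B :: "'a set"
    and Y :: "'b set" and Bh :: "'b set set" and z :: 'b
    and \<phi> :: "'b \<Rightarrow> 'a set"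
  assumes biplane: "symmetric_design 56 11 2 X Bs"
    and B: "B \<in> Bs"
    and qs_design: "t_design 2 56 12 9 Y Bh"
    and qs: "quasi_symmetric 0 3 Bh"
    and iso_bij: "bij_betw \<phi> (Y - {z}) (Bs - {B})"
    and iso_blocks: "(\<lambda>D. \<phi> ` D) ` derived_blocks Bh z = dual_residual_blocks X Bs B"
    and C: "C \<in> Bh" "z \<notin> C"
    and p: "p \<in> X"
  shows "3 dvd card {D\<in>\<phi> ` C. p \<in> D}"
proof -
  note d = bi_basic(1)[OF biplane]
  note f = design_fin[OF d]
  note g = design_fin[OF qs_design]
  define K where "K = \<phi> ` C"
  define n where "n q = card {D\<in>K. q \<in> D}" for q
  have inj: "inj_on \<phi> (Y - {z})" using iso_bij bij_betw_def by blast
  have CY: "C \<subseteq> Y - {z}" using g(4)[OF C(1)] C(2) by auto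
  have phiY: "\<phi> ` (Y - {z}) = Bs - {B}" using iso_bij by (simp add: bij_betw_def)
  have KB: "K \<subseteq> Bs - {B}" unfolding K_def using image_mono[OF CY, of \<phi>] phiY by simp
  have fK: "finite K" using f(2) KB by (meson Diff_subset rev_finite_subset)
  have cK: "card K = 12" unfolding K_def using card_image[OF inj_on_subset[OF inj CY]] g(5)[OF C(1)] by simp
  have out: "3 dvd n q" if q: "q \<in> X - B" for q
  proof -
    define P where "P = {D \<in> Bs - {B}. q \<in> D - B}"
    have "P \<in> dual_residual_blocks X Bs B" unfolding P_def dual_residual_blocks_def using q by blast
    then have "P \<in> (\<lambda>D. \<phi> ` D) ` derived_blocks Bh z" using iso_blocks by simp
    then obtain E' where E': "E' \<in> derived_blocks Bh z" "P = \<phi> ` E'" by (rule imageE)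
    then obtain E where E: "E \<in> Bh" "z \<in> E" "E' = E - {z}" unfolding derived_blocks_def by auto
    have EY: "E - {z} \<subseteq> Y - {z}" using g(4)[OF E(1)] by auto
    have "{D\<in>K. q \<in> D} = K \<inter> P" using KB q by (auto simp: P_def)
    also have "\<dots> = \<phi> ` (C \<inter> (E - {z}))" unfolding K_def E'(2) E(3)
      using inj_on_image_Int[OF inj CY EY] by simp
    finally have "n q = card (C \<inter> (E - {z}))"
      unfolding n_def using card_image[OF inj_on_subset[OF inj, of "C \<inter> (E - {z})"]] CY by auto
    also have "C \<inter> (E - {z}) = C \<inter> E" using C(2) by auto
    finally have "n q = card (C \<inter> E)" .
    moreover have "C \<noteq> E" using C(2) E(2) by auto
    ultimately have "n q = 0 \<or> n q = 3"
      using qs[unfolded quasi_symmetric_def, rule_format, OF C(1) E(1)] by simp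
    then show ?thesis by auto
  qed
  have sumD: "3 dvd (\<Sum>q\<in>D. n q)" if D: "D \<in> Bs" for D
  proof -
    have fD: "finite D" using f(4)[OF D(1)] f(1) by (rule finite_subset)
    have "(\<Sum>q\<in>D. n q) = (\<Sum>D'\<in>K. card {q\<in>D. q \<in> D'})"
      unfolding n_def using fD fK by (rule double_count)
    moreover have "(\<Sum>D'\<in>K. card {q\<in>D. q \<in> D'} mod 3) = (\<Sum>D'\<in>K. 2)"
    proof (intro sum.cong refl)
      fix D' assume D': "D' \<in> K"
      have "{q\<in>D. q \<in> D'} = D \<inter> D'" by auto
      moreover have "card (D \<inter> D') = 11 \<or> card (D \<inter> D') = 2"
      proof (cases "D' = D")
        case True then show ?thesis using f(5)[OF D] by simp
      next
        case False then show ?thesis using bi_int[OF biplane D] D' KB by auto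
      qed
      ultimately show "card {q\<in>D. q \<in> D'} mod 3 = 2" by auto
    qed
    ultimately have "(\<Sum>q\<in>D. n q) mod 3 = (\<Sum>D'\<in>K. (2::nat)) mod 3"
      using mod_sum_eq[of "\<lambda>D'. card {q\<in>D. q \<in> D'}" 3 K] by simp
    then show ?thesis using cK by (simp add: dvd_eq_mod_eq_0)
  qed
  have pair: "3 dvd n p1 + n p2" if "p1 \<in> B" "p2 \<in> B" "p1 \<noteq> p2" for p1 p2
  proof -
    have BX: "B \<subseteq> X" using f B by auto
    have c2: "card {C\<in>Bs. p1 \<in> C \<and> p2 \<in> C} = 2" using design_pair[OF d] that BX by auto
    have "\<exists>D\<in>Bs. D \<noteq> B \<and> p1 \<in> D \<and> p2 \<in> D"
    proof (rule ccontr)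
      assume "\<not> ?thesis"
      then have "{C\<in>Bs. p1 \<in> C \<and> p2 \<in> C} \<subseteq> {B}" by auto
      then have "card {C\<in>Bs. p1 \<in> C \<and> p2 \<in> C} \<le> card {B}" by (rule card_mono[rotated]) simp
      then show False using c2 by simp
    qed
    then obtain D where D: "D \<in> Bs" "D \<noteq> B" "p1 \<in> D" "p2 \<in> D" by blast
    have fD: "finite D" using f(4)[OF D(1)] f(1) by (rule finite_subset)
    have "card (B \<inter> D) = 2" using bi_int[OF biplane B D(1) D(2)] .
    moreover have "{p1,p2} \<subseteq> B \<inter> D" using that D by auto
    moreover have "card {p1,p2} = 2" using that by auto
    moreover have "finite (B \<inter> D)" using fD by simp
    ultimately have "{p1,p2} = B \<inter> D" using card_subset_eq[of "B \<inter> D" "{p1,p2}"] by simp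
    then have DB: "D \<inter> B = {p1,p2}" by auto
    have "(\<Sum>q\<in>D. n q) = (\<Sum>q\<in>D \<inter> B. n q) + (\<Sum>q\<in>D - B. n q)"
      using fD by (rule sum.Int_Diff)
    also have "(\<Sum>q\<in>D \<inter> B. n q) = n p1 + n p2" using DB that by simp
    finally have eq: "(\<Sum>q\<in>D. n q) = n p1 + n p2 + (\<Sum>q\<in>D - B. n q)" .
    have "3 dvd (\<Sum>q\<in>D - B. n q)" using out f(4)[OF D(1)] by (intro dvd_sum) auto
    then show ?thesis using sumD[OF D(1)] eq by (simp add: dvd_add_left_iff)
  qed
  have "3 dvd n p"
  proof (cases "p \<in> B")
    case False then show ?thesis using out p by auto
  next
    case True
    have fB: "finite B" using f(4)[OF B] f(1) by (rule finite_subset)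
    have cB: "card B = 11" using f B by auto
    have "card (B - {p}) = 10" using True fB cB by (simp add: card_Diff_singleton)
    then obtain p' where p': "p' \<in> B - {p}" by (cases "B - {p} = {}") auto
    have "card (B - {p} - {p'}) = 9" using p' fB \<open>card (B - {p}) = 10\<close> by (simp add: card_Diff_singleton)
    then obtain p'' where p'': "p'' \<in> B - {p} - {p'}" by (cases "B - {p} - {p'} = {}") auto
    have a: "3 dvd n p + n p'" using pair True p' by auto
    have b: "3 dvd n p + n p''" using pair True p'' by auto
    have c: "3 dvd n p' + n p''" using pair p' p'' by auto
    from a b c show ?thesis by presburger
  qed
  then show ?thesis unfolding n_def K_def .
qed

lemma three0: "(of_nat (3*m) :: 3) = 0"
proof -
  have "(of_nat (3*m) :: 3) = of_nat 3 * of_nat m" by simp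
  also have "(of_nat 3 :: 3) = 0" by simp
  finally show ?thesis by simp
qed

theorem lemma3:
  fixes X :: "'a set" and Bs :: "'a set set" and B :: "'a set"
    and Y :: "'b set" and Bh :: "'b set set" and z :: 'b
    and \<phi> :: "'b \<Rightarrow> 'a set"
  assumes biplane: "symmetric_design 56 11 2 X Bs"
    and B: "B \<in> Bs"
    and qs_design: "t_design 2 56 12 9 Y Bh"
    and qs: "quasi_symmetric 0 3 Bh"
    and z: "z \<in> Y"
    and iso_bij: "bij_betw \<phi> (Y - {z}) (Bs - {B})"
    and iso_blocks: "(\<lambda>D. \<phi> ` D) ` derived_blocks Bh z = dual_residual_blocks X Bs B"
  shows "\<exists>T \<subseteq> S_B X Bs B. card T = 165 \<and>
           inj_on (support (Bs - {B})) T \<and>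
           support (Bs - {B}) ` T = (\<lambda>D. \<phi> ` D) ` pt_residual_blocks Bh z \<and>
           t_design 1 55 12 36 (Bs - {B}) (support (Bs - {B}) ` T) \<and>
           (\<forall>D1 \<in> support (Bs - {B}) ` T. \<forall>D2 \<in> support (Bs - {B}) ` T.
              D1 \<noteq> D2 \<longrightarrow> card (D1 \<inter> D2) = 0 \<or> card (D1 \<inter> D2) = 3)"
proof -
  note d = bi_basic(1)[OF biplane]
  note f = design_fin[OF d]
  note g = design_fin[OF qs_design]
  have inj: "inj_on \<phi> (Y - {z})" using iso_bij bij_betw_def by blast
  have phiY: "\<phi> ` (Y - {z}) = Bs - {B}" using iso_bij by (simp add: bij_betw_def)
  have r45: "card {C\<in>Bh. y \<in> C} = 45" if "y \<in> Y" for y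
    using rep2[OF qs_design that] by simp
  have b210: "card Bh = 210" using blocks_count[OF qs_design r45] by simp
  define R where "R = pt_residual_blocks Bh z"
  have R_eq: "R = Bh - {C\<in>Bh. z \<in> C}" by (auto simp: R_def pt_residual_blocks_def)
  have cR: "card R = 165" unfolding R_eq using r45[OF z] b210 g(2)
    by (subst card_Diff_subset) auto
  have fR: "finite R" using g(2) R_eq by simp
  have CR: "C \<in> Bh" "z \<notin> C" "C \<subseteq> Y - {z}" if "C \<in> R" for C
    using that g(4) by (auto simp: R_def pt_residual_blocks_def)
  define vec :: "'a set set \<Rightarrow> 'a set \<Rightarrow> 3" where "vec K = (\<lambda>D. if D \<in> K then 1 else 0)" for K
  define T where "T = (\<lambda>C. vec (\<phi> ` C)) ` R"
  have img_sub: "\<phi> ` C \<subseteq> Bs - {B}" if "C \<in> R" for C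
    using image_mono[OF CR(3)[OF that], of \<phi>] phiY by simp
  have img_card: "card (\<phi> ` C) = card C" if "C \<subseteq> Y - {z}" for C
    using card_image[OF inj_on_subset[OF inj that]] .
  have supp: "support A (vec K) = K" if "K \<subseteq> A" for A K
    using that by (auto simp: support_def vec_def)
  have suppT: "support (Bs - {B}) (vec (\<phi> ` C)) = \<phi> ` C" if "C \<in> R" for C
    by (rule supp[OF img_sub[OF that]])
  have injR: "inj_on (\<lambda>C. \<phi> ` C) R"
  proof (rule inj_onI)
    fix C1 C2 assume "C1 \<in> R" "C2 \<in> R" "\<phi> ` C1 = \<phi> ` C2"
    then show "C1 = C2" using CR inj_on_image_eq_iff[OF inj] by metis
  qed
  have injR2: "inj_on (\<lambda>C. vec (\<phi> ` C)) R"
  proof (rule inj_onI)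
    fix C1 C2 assume a: "C1 \<in> R" "C2 \<in> R" "vec (\<phi> ` C1) = vec (\<phi> ` C2)"
    then have "\<phi> ` C1 = \<phi> ` C2" using suppT by metis
    then show "C1 = C2" using injR a inj_onD by metis
  qed
  have suppimg: "support (Bs - {B}) ` T = (\<lambda>D. \<phi> ` D) ` R"
    unfolding T_def image_image using suppT by (auto intro!: image_cong)
  have TS: "T \<subseteq> S_B X Bs B"
  proof
    fix v assume "v \<in> T"
    then obtain C where C: "C \<in> R" and v: "v = vec (\<phi> ` C)" unfolding T_def by blast
    define K where "K = \<phi> ` C"
    have KB: "K \<subseteq> Bs - {B}" using img_sub[OF C] K_def by simp
    have fK: "finite K" using f(2) KB by (meson Diff_subset rev_finite_subset)
    have vv: "v \<in> vecs Bs" using KB by (auto simp: vecs_def v vec_def K_def)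
    have dual: "(\<Sum>D\<in>Bs. v D * w D) = 0" if w: "w \<in> code_L X Bs" for w
    proof -
      obtain c where c: "\<forall>D\<in>Bs. w D = (\<Sum>p\<in>X. c p * (if p \<in> D then 1 else 0))"
        using w unfolding code_L_def by blast
      have "(\<Sum>D\<in>Bs. v D * w D) = (\<Sum>D\<in>Bs. if D \<in> K then w D else 0)"
        by (intro sum.cong) (auto simp: v vec_def K_def)
      also have "\<dots> = (\<Sum>D\<in>{D\<in>Bs. D \<in> K}. w D)" using f(2) by (simp add: sum.inter_filter)
      also have "{D\<in>Bs. D \<in> K} = K" using KB by auto
      also have "(\<Sum>D\<in>K. w D) = (\<Sum>D\<in>K. \<Sum>p\<in>X. c p * (if p \<in> D then 1 else 0))"
        using c KB by (intro sum.cong) auto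
      also have "\<dots> = (\<Sum>p\<in>X. \<Sum>D\<in>K. c p * (if p \<in> D then 1 else 0))" by (rule sum.swap)
      also have "\<dots> = (\<Sum>p\<in>X. c p * of_nat (card {D\<in>K. p \<in> D}))"
      proof (intro sum.cong refl)
        fix p assume p: "p \<in> X"
        have "(\<Sum>D\<in>K. c p * (if p \<in> D then 1 else 0)) = c p * (\<Sum>D\<in>K. (if p \<in> D then 1 else 0))"
          by (simp add: sum_distrib_left)
        also have "(\<Sum>D\<in>K. (if p \<in> D then 1 else 0)) = (of_nat (\<Sum>D\<in>K. (if p \<in> D then 1 else 0)) :: 3)"
          unfolding of_nat_sum by (intro sum.cong) auto
        also have "(\<Sum>D\<in>K. (if p \<in> D then 1 else 0)) = card {D\<in>K. p \<in> D}"
          using fK by (simp add: card_filter_sum)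
        finally show "(\<Sum>D\<in>K. c p * (if p \<in> D then 1 else 0)) = c p * of_nat (card {D\<in>K. p \<in> D})" .
      qed
      also have "\<dots> = 0"
      proof (intro sum.neutral ballI)
        fix p assume p: "p \<in> X"
        have "3 dvd card {D\<in>K. p \<in> D}" unfolding K_def
          using key_mod3[OF biplane B qs_design qs iso_bij iso_blocks CR(1)[OF C] CR(2)[OF C] p] .
        then obtain m where "card {D\<in>K. p \<in> D} = 3 * m" by blast
        then show "c p * of_nat (card {D\<in>K. p \<in> D}) = 0" using three0 by simp
      qed
      finally show ?thesis .
    qed
    have vd: "v \<in> dual_code Bs (code_L X Bs)" using vv dual by (simp add: dual_code_def)
    have v01: "\<forall>D\<in>Bs. v D = 0 \<or> v D = 1" by (simp add: v vec_def)
    have "K \<subseteq> Bs" using KB by auto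
    then have "support Bs v = K" unfolding v K_def[symmetric] by (rule supp)
    moreover have "card K = 12" using img_card[OF CR(3)[OF C]] g(5)[OF CR(1)[OF C]] K_def by simp
    ultimately have vS: "v \<in> S_set X Bs" using vd v01 by (simp add: S_set_def)
    have "v B = 0" using KB by (auto simp: v vec_def K_def)
    then show "v \<in> S_B X Bs B" using vS by (simp add: S_B_def)
  qed
  have cT: "card T = 165" unfolding T_def using card_image[OF injR2] cR by simp
  have injT: "inj_on (support (Bs - {B})) T"
  proof (rule inj_onI)
    fix v1 v2 assume "v1 \<in> T" "v2 \<in> T" "support (Bs - {B}) v1 = support (Bs - {B}) v2"
    then show "v1 = v2" unfolding T_def using suppT by auto
  qed
  have des: "t_design 1 55 12 36 (Bs - {B}) ((\<lambda>D. \<phi> ` D) ` R)"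
    unfolding t_design_def
  proof (intro conjI allI impI ballI)
    show "finite (Bs - {B})" using f by simp
    show "card (Bs - {B}) = 55" using f B bi_basic(2)[OF biplane] by (simp add: card_Diff_singleton)
  next
    fix E assume "E \<in> (\<lambda>D. \<phi> ` D) ` R"
    then obtain C where C: "C \<in> R" "E = \<phi> ` C" by blast
    show "E \<subseteq> Bs - {B}" using img_sub C by simp
    show "card E = 12" using img_card[OF CR(3)[OF C(1)]] g(5)[OF CR(1)[OF C(1)]] C by simp
  next
    fix T' assume T': "T' \<subseteq> Bs - {B} \<and> card T' = 1"
    then obtain D where D: "T' = {D}" "D \<in> Bs - {B}" by (auto simp: card_Suc_eq)
    then obtain y where y: "y \<in> Y - {z}" "D = \<phi> y" using phiY by auto
    have "{E \<in> (\<lambda>D. \<phi> ` D) ` R. T' \<subseteq> E} = (\<lambda>D. \<phi> ` D) ` {C\<in>R. y \<in> C}"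
    proof (rule set_eqI, rule iffI)
      fix E assume "E \<in> {E \<in> (\<lambda>D. \<phi> ` D) ` R. T' \<subseteq> E}"
      then obtain C where C: "C \<in> R" "E = \<phi> ` C" "\<phi> y \<in> \<phi> ` C" using D y by auto
      then have "y \<in> C" using inj_on_image_mem_iff[OF inj y(1) CR(3)[OF C(1)]] by simp
      then show "E \<in> (\<lambda>D. \<phi> ` D) ` {C\<in>R. y \<in> C}" using C by auto
    qed (use D y in auto)
    also have "card \<dots> = card {C\<in>R. y \<in> C}"
      using card_image[OF inj_on_subset[OF injR]] by auto
    also have "{C\<in>R. y \<in> C} = {C\<in>Bh. y \<in> C} - {C\<in>Bh. y \<in> C \<and> z \<in> C}" using R_eq by auto
    also have "card \<dots> = 45 - 9"
      using r45[of y] y design_pair[OF qs_design, of y z] z g(2)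
      by (subst card_Diff_subset) auto
    finally show "card {E \<in> (\<lambda>D. \<phi> ` D) ` R. T' \<subseteq> E} = 36" by simp
  qed
  have int: "\<forall>D1 \<in> (\<lambda>D. \<phi> ` D) ` R. \<forall>D2 \<in> (\<lambda>D. \<phi> ` D) ` R.
              D1 \<noteq> D2 \<longrightarrow> card (D1 \<inter> D2) = 0 \<or> card (D1 \<inter> D2) = 3"
  proof (intro ballI impI)
    fix D1 D2 assume "D1 \<in> (\<lambda>D. \<phi> ` D) ` R" "D2 \<in> (\<lambda>D. \<phi> ` D) ` R" "D1 \<noteq> D2"
    then obtain C1 C2 where C: "C1 \<in> R" "C2 \<in> R" "D1 = \<phi> ` C1" "D2 = \<phi> ` C2" "C1 \<noteq> C2" by blast
    have "D1 \<inter> D2 = \<phi> ` (C1 \<inter> C2)" using C inj_on_image_Int[OF inj CR(3)[OF C(1)] CR(3)[OF C(2)]] by simp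
    moreover have "C1 \<inter> C2 \<subseteq> Y - {z}" using CR(3)[OF C(1)] by auto
    ultimately have "card (D1 \<inter> D2) = card (C1 \<inter> C2)" using img_card by simp
    then show "card (D1 \<inter> D2) = 0 \<or> card (D1 \<inter> D2) = 3"
      using qs[unfolded quasi_symmetric_def, rule_format, OF CR(1)[OF C(1)] CR(1)[OF C(2)] C(5)] by simp
  qed
  have suppimg': "support (Bs - {B}) ` T = (\<lambda>D. \<phi> ` D) ` pt_residual_blocks Bh z"
    using suppimg by (simp add: R_def)
  show ?thesis
  proof (rule exI[of _ T], intro conjI)
    show "T \<subseteq> S_B X Bs B" by (fact TS)
    show "card T = 165" by (fact cT)
    show "inj_on (support (Bs - {B})) T" by (fact injT)
    show "support (Bs - {B}) ` T = (\<lambda>D. \<phi> ` D) ` pt_residual_blocks Bh z" by (fact suppimg')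
    show "t_design 1 55 12 36 (Bs - {B}) (support (Bs - {B}) ` T)"
      unfolding suppimg' using des by (simp only: R_def)
    show "\<forall>D1\<in>support (Bs - {B}) ` T. \<forall>D2\<in>support (Bs - {B}) ` T.
            D1 \<noteq> D2 \<longrightarrow> card (D1 \<inter> D2) = 0 \<or> card (D1 \<inter> D2) = 3"
      unfolding suppimg' using int by (simp only: R_def)
  qed
qed

end
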